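(* Let $n\ge 1$ and let $C_n$ be an $n$-crossing, i.e. a chord diagram consisting of $n$ pairwise crossing chords. Then $ex(C_n)$ equals the number of $0$-$1$ Young diagrams $M$ of shape $(n,n-1,\dots,1)$ such that (1) every column of $M$ contains at most one $1$, and (2) every row of $M$ contains an even number of $1$'s.
   Context: A chord diagram is a set of chords of a circle no two sharing an endpoint; a crossing is a pair of chords intersecting in the interior; a diagram is nonintersecting if it has no crossing. For a crossing $S=\{ac,bd\}$ of $E$ with $a,b,c,d$ in cyclic order, the chord expansion replaces $E$ by $(E\setminus S)\cup\{ab,cd\}$ and $(E\setminus S)\cup\{da,bc\}$. Iterating until no crossings remain yields a multiset of nonintersecting diagrams independent of the choices made; its cardinality (with multiplicity) is the chord expansion number $ex(E)$. A $0$-$1$ Young diagram of shape $(a_1,\dots,a_m)$ is a Young diagram with left-justified rows of lengths $a_1,\dots,a_m$ in which each box holds $0$ or $1$. *)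

theory Defs
  imports "HOL-Library.FuncSet"
begin

text \<open>Endpoints on the circle are labelled by natural numbers; the cyclic order of
  the points on the circle is the cyclic order induced by the usual order on nat.\<close>

type_synonym chord = "nat set"

definition chord_diagram :: "chord set \<Rightarrow> bool" where
  "chord_diagram E \<longleftrightarrow> finite E \<and> (\<forall>c\<in>E. card c = 2) \<and>
     (\<forall>c\<in>E. \<forall>c'\<in>E. c \<noteq> c' \<longrightarrow> c \<inter> c' = {})"

definition crosses :: "chord \<Rightarrow> chord \<Rightarrow> bool" where
  "crosses x y \<longleftrightarrow> (\<exists>a b c d. a < b \<and> b < c \<and> c < d \<and>
      ((x = {a, c} \<and> y = {b, d}) \<or> (x = {b, d} \<and> y = {a, c})))"

definition nonintersecting :: "chord set \<Rightarrow> bool" where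
  "nonintersecting E \<longleftrightarrow> (\<forall>x\<in>E. \<forall>y\<in>E. \<not> crosses x y)"

text \<open>expands E k: some complete iteration of chord expansions starting from E
  produces a multiset of k nonintersecting diagrams.\<close>
inductive expands :: "chord set \<Rightarrow> nat \<Rightarrow> bool" where
  finished: "nonintersecting E \<Longrightarrow> expands E 1"
| expand: "\<lbrakk> {a, c} \<in> E; {b, d} \<in> E; a < b; b < c; c < d;
           expands ((E - {{a, c}, {b, d}}) \<union> {{a, b}, {c, d}}) k1;
           expands ((E - {{a, c}, {b, d}}) \<union> {{d, a}, {b, c}}) k2 \<rbrakk>
         \<Longrightarrow> expands E (k1 + k2)"

text \<open>Chord expansion number (the count is independent of the choices made).\<close>
definition ex :: "chord set \<Rightarrow> nat" where
  "ex E = (THE k. expands E k)"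

definition n_crossing :: "nat \<Rightarrow> chord set \<Rightarrow> bool" where
  "n_crossing n E \<longleftrightarrow> chord_diagram E \<and> card E = n \<and>
     (\<forall>x\<in>E. \<forall>y\<in>E. x \<noteq> y \<longrightarrow> crosses x y)"

definition staircase :: "nat \<Rightarrow> (nat \<times> nat) set" where
  "staircase n = {(i, j). i < n \<and> j < n - i}"

definition zero_one_fillings :: "nat \<Rightarrow> (nat \<times> nat \<Rightarrow> nat) set" where
  "zero_one_fillings n = staircase n \<rightarrow>\<^sub>E {0, 1}"

definition good_filling :: "nat \<Rightarrow> (nat \<times> nat \<Rightarrow> nat) \<Rightarrow> bool" where
  "good_filling n M \<longleftrightarrow>
     (\<forall>j. (\<Sum>i\<in>{i. (i, j) \<in> staircase n}. M (i, j)) \<le> 1) \<and>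
     (\<forall>i<n. even (\<Sum>j<n - i. M (i, j)))"

end

theory Submission
  imports Defs
begin

definition pts :: "chord set \<Rightarrow> nat set" where "pts E = \<Union>E"

definition gc :: "chord \<Rightarrow> nat set \<Rightarrow> int" where
 "gc c X = (if Min c \<in> X \<and> Max c \<notin> X then 1 else if Max c \<in> X \<and> Min c \<notin> X then -1 else 0)"

definition ht :: "nat set \<Rightarrow> nat set \<Rightarrow> nat \<Rightarrow> int" where
 "ht P X y = int (card {p\<in>X. p<y}) - int (card {p\<in>P-X. p<y})"

definition wt :: "(nat \<Rightarrow> int) \<Rightarrow> nat set \<Rightarrow> nat set \<Rightarrow> int" where
 "wt \<alpha> P X = (\<Prod>y\<in>P-X. ht P X y + \<alpha> y)"

definition FF :: "(nat \<Rightarrow> int) \<Rightarrow> chord set \<Rightarrow> int" where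
 "FF \<alpha> E = (\<Sum>X\<in>Pow (pts E). (\<Prod>c\<in>E. gc c X) * wt \<alpha> (pts E) X)"

lemma gc_pair: "a < b \<Longrightarrow> gc {a,b} X = (if a\<in>X \<and> b\<notin>X then 1 else if b\<in>X \<and> a\<notin>X then -1 else 0)"
  by (simp add: gc_def)

lemma cd_pair: "chord_diagram E \<Longrightarrow> c \<in> E \<Longrightarrow> \<exists>a b. a<b \<and> c={a,b}"
  unfolding chord_diagram_def
  by (metis card_2_iff insert_commute linorder_neqE_nat)

lemma cd_finite: "chord_diagram E \<Longrightarrow> finite (pts E)"
  unfolding chord_diagram_def pts_def
  by (metis card.infinite finite_Union zero_neq_numeral)

lemma cd_disj: "chord_diagram E \<Longrightarrow> c \<in> E \<Longrightarrow> c' \<in> E \<Longrightarrow> c \<noteq> c' \<Longrightarrow> c \<inter> c' = {}"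
  unfolding chord_diagram_def by blast

lemma local_id:
  assumes "a<b" "b<c" "c<d"
  shows "gc {a,c} X * gc {b,d} X = gc {a,b} X * gc {c,d} X + gc {d,a} X * gc {b,c} X"
proof -
  have "{d,a} = {a,d}" by auto
  then show ?thesis using assms by (simp add: gc_pair)
qed

lemma FF_add:
  assumes cd: "chord_diagram E" and ac: "{a,c} \<in> E" and bd: "{b,d} \<in> E" and o: "a<b" "b<c" "c<d"
  shows "FF \<alpha> E = FF \<alpha> ((E - {{a,c},{b,d}}) \<union> {{a,b},{c,d}}) + FF \<alpha> ((E - {{a,c},{b,d}}) \<union> {{d,a},{b,c}})"
proof -
  define R where "R = E - {{a,c},{b,d}}"
  have fE: "finite E" using cd chord_diagram_def by auto
  have fR: "finite R" using fE R_def by auto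
  have Rdisj: "c' \<inter> {a,b,c,d} = {}" if "c' \<in> R" for c'
  proof -
    have "c' \<in> E" "c' \<noteq> {a,c}" "c' \<noteq> {b,d}" using that R_def by auto
    then have "c' \<inter> {a,c} = {}" "c' \<inter> {b,d} = {}" using cd_disj[OF cd] ac bd by blast+
    then show ?thesis by blast
  qed
  have nR: "{a,b} \<notin> R" "{c,d} \<notin> R" "{d,a} \<notin> R" "{b,c} \<notin> R" "{a,c} \<notin> R" "{b,d} \<notin> R"
    using Rdisj by blast+
  have E: "E = insert {a,c} (insert {b,d} R)" using ac bd R_def by auto
  have E1: "(E - {{a,c},{b,d}}) \<union> {{a,b},{c,d}} = insert {a,b} (insert {c,d} R)" using R_def by auto
  have E2: "(E - {{a,c},{b,d}}) \<union> {{d,a},{b,c}} = insert {d,a} (insert {b,c} R)" using R_def by auto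
  have ptsE: "pts E = pts R \<union> {a,b,c,d}" using E unfolding pts_def by auto
  have pts1: "pts (insert {a,b} (insert {c,d} R)) = pts E" using ptsE unfolding pts_def by auto
  have pts2: "pts (insert {d,a} (insert {b,c} R)) = pts E" using ptsE unfolding pts_def by auto
  have ne: "{a,c} \<noteq> {b,d}" "{a,b} \<noteq> {c,d}" "{d,a} \<noteq> {b,c}" using o by (auto simp: doubleton_eq_iff)
  have pE: "(\<Prod>c'\<in>E. gc c' X) = gc {a,c} X * gc {b,d} X * (\<Prod>c'\<in>R. gc c' X)" for X
    using E fR nR ne by simp
  have p1: "(\<Prod>c'\<in>insert {a,b} (insert {c,d} R). gc c' X) = gc {a,b} X * gc {c,d} X * (\<Prod>c'\<in>R. gc c' X)" for X
    using fR nR ne by simp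
  have p2: "(\<Prod>c'\<in>insert {d,a} (insert {b,c} R). gc c' X) = gc {d,a} X * gc {b,c} X * (\<Prod>c'\<in>R. gc c' X)" for X
    using fR nR ne by simp
  show ?thesis
    unfolding E1 E2 FF_def pts1 pts2 pE p1 p2 sum.distrib[symmetric]
    by (rule sum.cong) (auto simp: local_id[OF o] algebra_simps)
qed

lemma sum_Pow_insert:
  assumes "finite A" "x \<notin> A"
  shows "(\<Sum>X\<in>Pow (insert x A). g X) = (\<Sum>X\<in>Pow A. g X + g (insert x X))"
proof -
  have "(\<Sum>X\<in>Pow (insert x A). g X) = (\<Sum>X\<in>Pow A. g X) + (\<Sum>X\<in>insert x ` Pow A. g X)"
    unfolding Pow_insert by (rule sum.union_disjoint) (use assms in auto)
  also have "(\<Sum>X\<in>insert x ` Pow A. g X) = (\<Sum>X\<in>Pow A. g (insert x X))"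
    by (subst sum.reindex) (use assms in \<open>auto intro!: inj_onI simp: o_def\<close>)
  finally show ?thesis by (simp add: sum.distrib)
qed

lemma card_lt_insert:
  assumes "finite S"
  shows "card {x\<in>insert a S. x<y} = card {x\<in>S. x<(y::nat)} + (if a<y \<and> a\<notin>S then 1 else 0)"
proof (cases "a<y \<and> a\<notin>S")
  case True
  then have "{x\<in>insert a S. x<y} = insert a {x\<in>S. x<y}" by auto
  then show ?thesis using True assms by simp
next
  case False
  then have "{x\<in>insert a S. x<y} = {x\<in>S. x<y}" by auto
  then show ?thesis using False by simp
qed

lemma ht_ins:
  assumes f: "finite P'" and pq: "p \<notin> P'" "q \<notin> P'" "p \<noteq> q" and X: "X \<subseteq> P'"
  shows "ht (insert p (insert q P')) (insert p X) y = ht P' X y + of_bool (p<y) - of_bool (q<y)"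
proof -
  have fX: "finite X" using X f finite_subset by auto
  have d: "insert p (insert q P') - insert p X = insert q (P' - X)" using pq X by auto
  have c1: "card {x\<in>insert p X. x<y} = card {x\<in>X. x<y} + (if p<y then 1 else 0)"
    using card_lt_insert[OF fX, of p y] pq X by auto
  have c2: "card {x\<in>insert q (P' - X). x<y} = card {x\<in>P'-X. x<y} + (if q<y then 1 else 0)"
    using card_lt_insert[of "P'-X" q y] f pq X by auto
  show ?thesis unfolding ht_def d c1 c2 by simp
qed

lemma cd_sub: "chord_diagram E \<Longrightarrow> E' \<subseteq> E \<Longrightarrow> chord_diagram E'"
  unfolding chord_diagram_def by (meson finite_subset subset_iff)

lemma gc_other:
  assumes "finite c" "c \<noteq> {}" "p \<notin> c"
  shows "gc c (insert p X) = gc c X"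
proof -
  have "Min c \<noteq> p" "Max c \<noteq> p" using assms Min_in Max_in by metis+
  then show ?thesis unfolding gc_def by simp
qed

lemma FF_pair:
  assumes cd: "chord_diagram E" and pq: "p<q" "p \<notin> pts E" "q \<notin> pts E"
    and btw: "\<forall>y\<in>pts E. \<not>(p<y \<and> y<q)"
  shows "FF \<alpha> (insert {p,q} E) = (1 + \<alpha> q - \<alpha> p) * FF \<alpha> E"
proof -
  define P' where "P' = pts E"
  have f: "finite P'" using cd_finite[OF cd] P'_def by simp
  have fE: "finite E" using cd chord_diagram_def by auto
  have nE: "{p,q} \<notin> E" using pq unfolding pts_def by auto
  have pP: "pts (insert {p,q} E) = insert p (insert q P')" unfolding P'_def pts_def by auto
  have chords: "finite c \<and> c \<noteq> {} \<and> p \<notin> c \<and> q \<notin> c" if "c \<in> E" for c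
    using that cd pq unfolding chord_diagram_def pts_def
    by (metis UnionI card.infinite card.empty zero_neq_numeral)
  have gcE: "(\<Prod>c\<in>E. gc c (insert p X)) = (\<Prod>c\<in>E. gc c X)"
       "(\<Prod>c\<in>E. gc c (insert q X)) = (\<Prod>c\<in>E. gc c X)" for X
    using chords gc_other by (auto intro!: prod.cong)
  have gcE2: "(\<Prod>c\<in>E. gc c (insert p (insert q X))) = (\<Prod>c\<in>E. gc c X)" for X
    using gcE by simp
  have pqP: "p \<notin> P'" "q \<notin> P'" "p\<noteq>q" using pq P'_def by auto
  have same: "of_bool (p<y) = (of_bool (q<y)::int)" if "y \<in> P'" for y
    using btw that pq P'_def by auto
  have w1: "wt \<alpha> (insert p (insert q P')) (insert p X) = (ht P' X q + 1 + \<alpha> q) * wt \<alpha> P' X"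
    if X: "X \<subseteq> P'" for X
  proof -
    have d: "insert p (insert q P') - insert p X = insert q (P' - X)" using pqP X by auto
    have "wt \<alpha> (insert p (insert q P')) (insert p X)
        = (ht (insert p (insert q P')) (insert p X) q + \<alpha> q) *
          (\<Prod>y\<in>P'-X. ht (insert p (insert q P')) (insert p X) y + \<alpha> y)"
      unfolding wt_def d using f pqP by simp
    also have "(\<Prod>y\<in>P'-X. ht (insert p (insert q P')) (insert p X) y + \<alpha> y) = wt \<alpha> P' X"
      unfolding wt_def using ht_ins[OF f pqP X] same by (auto intro!: prod.cong)
    finally show ?thesis using ht_ins[OF f pqP X, of q] pq by simp
  qed
  have w2: "wt \<alpha> (insert p (insert q P')) (insert q X) = (ht P' X q + \<alpha> p) * wt \<alpha> P' X"
    if X: "X \<subseteq> P'" for X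
  proof -
    have pqP': "q \<notin> P'" "p \<notin> P'" "q\<noteq>p" using pqP by auto
    have ii: "insert p (insert q P') = insert q (insert p P')" by auto
    have d: "insert p (insert q P') - insert q X = insert p (P' - X)" using pqP X by auto
    have "wt \<alpha> (insert p (insert q P')) (insert q X)
        = (ht (insert q (insert p P')) (insert q X) p + \<alpha> p) *
          (\<Prod>y\<in>P'-X. ht (insert q (insert p P')) (insert q X) y + \<alpha> y)"
      unfolding wt_def d ii[symmetric] using f pqP by simp
    also have "(\<Prod>y\<in>P'-X. ht (insert q (insert p P')) (insert q X) y + \<alpha> y) = wt \<alpha> P' X"
      unfolding wt_def using ht_ins[OF f pqP' X] same by (auto intro!: prod.cong)
    also have "ht (insert q (insert p P')) (insert q X) p = ht P' X q"
    proof -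
      have "ht (insert q (insert p P')) (insert q X) p = ht P' X p"
        using ht_ins[OF f pqP' X, of p] pq by simp
      also have "\<dots> = ht P' X q"
      proof -
        have lt: "x<p \<longleftrightarrow> x<q" if "x\<in>P'" for x
          using btw that pq pqP P'_def by (metis less_trans linorder_neqE_nat)
        have "{x\<in>X. x<p} = {x\<in>X. x<q}" "{x\<in>P'-X. x<p} = {x\<in>P'-X. x<q}"
          by (rule Collect_cong; use X lt in blast)+
        then show ?thesis unfolding ht_def by simp
      qed
      finally show ?thesis .
    qed
    finally show ?thesis .
  qed
  have "FF \<alpha> (insert {p,q} E) = (\<Sum>X\<in>Pow (insert p (insert q P')).
          gc {p,q} X * (\<Prod>c\<in>E. gc c X) * wt \<alpha> (insert p (insert q P')) X)"
    unfolding FF_def pP using fE nE by (simp add: mult.assoc)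
  also have "\<dots> = (\<Sum>X\<in>Pow P'. (\<Prod>c\<in>E. gc c X) * wt \<alpha> (insert p (insert q P')) (insert p X)
        - (\<Prod>c\<in>E. gc c X) * wt \<alpha> (insert p (insert q P')) (insert q X))"
    apply (subst sum_Pow_insert)
    using f pqP apply auto[2]
    apply (subst sum_Pow_insert)
    using f pqP apply auto[2]
    apply (rule sum.cong[OF refl])
    subgoal for X
      apply (subgoal_tac "p \<notin> X \<and> q \<notin> X")
      using pq apply (simp add: gc_pair gcE gcE2)
      using pqP by auto
    done
  also have "\<dots> = (\<Sum>X\<in>Pow P'. (1 + \<alpha> q - \<alpha> p) * ((\<Prod>c\<in>E. gc c X) * wt \<alpha> P' X))"
    by (rule sum.cong[OF refl]) (auto simp: w1 w2 algebra_simps)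
  also have "\<dots> = (1 + \<alpha> q - \<alpha> p) * FF \<alpha> E"
    unfolding FF_def P'_def by (simp add: sum_distrib_left)
  finally show ?thesis .
qed

lemma crosses_iff:
  assumes "a<b" "c<d"
  shows "crosses {a,b} {c,d} \<longleftrightarrow> (a<c \<and> c<b \<and> b<d) \<or> (c<a \<and> a<d \<and> d<b)"
proof
  assume "crosses {a,b} {c,d}"
  then obtain a' b' c' d' where o: "a'<b'" "b'<c'" "c'<d'" and
    h: "({a,b} = {a',c'} \<and> {c,d} = {b',d'}) \<or> ({a,b} = {b',d'} \<and> {c,d} = {a',c'})"
    unfolding crosses_def by blast
  from h show "(a<c \<and> c<b \<and> b<d) \<or> (c<a \<and> a<d \<and> d<b)"
  proof
    assume "{a,b} = {a',c'} \<and> {c,d} = {b',d'}"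
    then have "a = a'" "b = c'" "c = b'" "d = d'" using assms o by (auto simp: doubleton_eq_iff)
    then show ?thesis using o by auto
  next
    assume "{a,b} = {b',d'} \<and> {c,d} = {a',c'}"
    then have "a = b'" "b = d'" "c = a'" "d = c'" using assms o by (auto simp: doubleton_eq_iff)
    then show ?thesis using o by auto
  qed
next
  assume "(a<c \<and> c<b \<and> b<d) \<or> (c<a \<and> a<d \<and> d<b)"
  then show "crosses {a,b} {c,d}"
  proof
    assume "a<c \<and> c<b \<and> b<d" then show ?thesis unfolding crosses_def by blast
  next
    assume "c<a \<and> a<d \<and> d<b" then show ?thesis unfolding crosses_def by blast
  qed
qed

lemma FF_empty: "FF \<alpha> {} = 1"
  unfolding FF_def pts_def wt_def by simp

lemma FF_cong: "(\<And>y. y \<in> pts E \<Longrightarrow> \<alpha> y = \<beta> y) \<Longrightarrow> FF \<alpha> E = FF \<beta> E"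
proof -
  assume a: "\<And>y. y \<in> pts E \<Longrightarrow> \<alpha> y = \<beta> y"
  have "wt \<alpha> (pts E) X = wt \<beta> (pts E) X" for X unfolding wt_def using a by (intro prod.cong) auto
  then show ?thesis unfolding FF_def by simp
qed

lemma pair_minmax: "a<b \<Longrightarrow> Min {a,b} = a \<and> Max {a,b} = (b::nat)"
  by auto

lemma FF_NC:
  assumes "chord_diagram E" "nonintersecting E"
  shows "FF \<alpha> E = (\<Prod>c\<in>E. 1 + \<alpha> (Max c) - \<alpha> (Min c))"
  using assms
proof (induction "card E" arbitrary: E rule: less_induct)
  case less
  have fE: "finite E" using less.prems chord_diagram_def by auto
  show ?case
  proof (cases "E = {}")
    case True then show ?thesis by (simp add: FF_empty)
  next
    case False
    then obtain c0 where "c0 \<in> E" by auto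
    define len where "len c = Max c - Min c" for c :: "nat set"
    obtain c where cE: "c \<in> E" and cmin: "\<forall>c'. c' \<in> E \<longrightarrow> len c \<le> len c'"
      using ex_has_least_nat[of "\<lambda>c. c \<in> E" c0 len] \<open>c0 \<in> E\<close> by blast
    obtain p q where pq: "p<q" "c = {p,q}" using cd_pair[OF less.prems(1) cE] by blast
    define E' where "E' = E - {c}"
    have cd': "chord_diagram E'" using cd_sub[OF less.prems(1)] E'_def by auto
    have nc': "nonintersecting E'" using less.prems(2) E'_def unfolding nonintersecting_def by auto
    have Eins: "E = insert {p,q} E'" using cE pq E'_def by auto
    have pq': "p \<notin> pts E'" "q \<notin> pts E'"
      using cd_disj[OF less.prems(1) cE] E'_def pq unfolding pts_def by blast+
    have btw: "\<forall>y\<in>pts E'. \<not>(p<y \<and> y<q)"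
    proof (intro ballI notI)
      fix y assume y: "y \<in> pts E'" and pyq: "p<y \<and> y<q"
      then obtain c' where c': "c' \<in> E'" "y \<in> c'" unfolding pts_def by auto
      obtain r s where rs: "r<s" "c' = {r,s}" using cd_pair[OF cd' c'(1)] by blast
      have c'E: "c' \<in> E" using c' E'_def by auto
      have "r \<notin> {p,q}" "s \<notin> {p,q}" using pq' c' rs unfolding pts_def by auto
      have nx: "\<not> crosses {p,q} {r,s}" "\<not> crosses {r,s} {p,q}"
        using less.prems(2) cE c'E pq rs unfolding nonintersecting_def by auto
      have lc: "len c = q - p" "len c' = s - r" using pq rs by (auto simp: len_def)
      have "len c \<le> len c'" using cmin c'E by auto
      have ys: "y = r \<or> y = s" using c'(2) rs by auto
      then show False
      proof
        assume "y = r"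
        show False
        proof (cases "q < s")
          case True
          then have "crosses {p,q} {r,s}" using pq(1) rs(1) pyq \<open>y = r\<close> by (simp add: crosses_iff)
          then show False using nx by simp
        next
          case False
          then have "s < q" using \<open>s \<notin> {p,q}\<close> by auto
          then show False using \<open>len c \<le> len c'\<close> lc pyq \<open>y = r\<close> rs(1) by linarith
        qed
      next
        assume "y = s"
        show False
        proof (cases "r < p")
          case True
          then have "crosses {r,s} {p,q}" using pq(1) rs(1) pyq \<open>y = s\<close> by (simp add: crosses_iff)
          then show False using nx by simp
        next
          case False
          then have "p < r" using \<open>r \<notin> {p,q}\<close> by auto
          then show False using \<open>len c \<le> len c'\<close> lc pyq \<open>y = s\<close> rs(1) by linarith
        qed
      qed
    qed
    have "FF \<alpha> E = (1 + \<alpha> q - \<alpha> p) * FF \<alpha> E'"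
      unfolding Eins by (rule FF_pair[OF cd' pq(1) pq' btw])
    also have "FF \<alpha> E' = (\<Prod>c\<in>E'. 1 + \<alpha> (Max c) - \<alpha> (Min c))"
    proof -
      have "card E' < card E" unfolding E'_def using fE cE by (rule card_Diff1_less)
      from less.hyps[OF this cd' nc'] show ?thesis .
    qed
    also have "(1 + \<alpha> q - \<alpha> p) * \<dots> = (\<Prod>c\<in>E. 1 + \<alpha> (Max c) - \<alpha> (Min c))"
    proof -
      have "{p,q} \<notin> E'" unfolding E'_def using pq(2) by simp
      moreover have "finite E'" unfolding E'_def using fE by simp
      ultimately show ?thesis unfolding Eins using pq by (simp add: pair_minmax)
    qed
    finally show ?thesis .
  qed
qed

lemma FF_NC0:
  assumes "chord_diagram E" "nonintersecting E"
  shows "FF (\<lambda>_. 0) E = 1"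
  using FF_NC[OF assms] by simp

lemma crosses_alt:
  assumes "x<y" "s<t" "s \<noteq> x" "s \<noteq> y" "t \<noteq> x" "t \<noteq> y"
  shows "crosses {x,y} {s,t} \<longleftrightarrow> ((x<s \<and> \<not> y<s) \<noteq> (x<t \<and> \<not> y<t))"
  unfolding crosses_iff[OF assms(1,2)] using assms by auto

lemma bool_ineq:
  assumes "Ab \<longrightarrow> Aa" "Ac \<longrightarrow> Ab" "Ad \<longrightarrow> Ac" "Bb \<longrightarrow> Ba" "Bc \<longrightarrow> Bb" "Bd \<longrightarrow> Bc"
    "Aa \<longrightarrow> Ba" "Ab \<longrightarrow> Bb" "Ac \<longrightarrow> Bc" "Ad \<longrightarrow> Bd"
  shows "of_bool ((Aa \<and> \<not>Ab) \<noteq> (Ba \<and> \<not>Bb)) + of_bool ((Ac \<and> \<not>Ad) \<noteq> (Bc \<and> \<not>Bd))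
      \<le> (of_bool ((Aa \<and> \<not>Ac) \<noteq> (Ba \<and> \<not>Bc)) + of_bool ((Ab \<and> \<not>Ad) \<noteq> (Bb \<and> \<not>Bd)) :: nat)"
    "of_bool ((Aa \<and> \<not>Ad) \<noteq> (Ba \<and> \<not>Bd)) + of_bool ((Ab \<and> \<not>Ac) \<noteq> (Bb \<and> \<not>Bc))
      \<le> (of_bool ((Aa \<and> \<not>Ac) \<noteq> (Ba \<and> \<not>Bc)) + of_bool ((Ab \<and> \<not>Ad) \<noteq> (Bb \<and> \<not>Bd)) :: nat)"
  using assms by (cases Aa; cases Ab; cases Ac; cases Ad; cases Ba; cases Bb; cases Bc; cases Bd; simp)+

lemma pointwise:
  assumes "a<b" "b<c" "c<d" "s<t" "s \<notin> {a,b,c,d}" "t \<notin> {a,b,c,d}"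
  shows "of_bool (crosses {a,b} {s,t}) + of_bool (crosses {c,d} {s,t})
    \<le> (of_bool (crosses {a,c} {s,t}) + of_bool (crosses {b,d} {s,t}) :: nat)"
    "of_bool (crosses {d,a} {s,t}) + of_bool (crosses {b,c} {s,t})
    \<le> (of_bool (crosses {a,c} {s,t}) + of_bool (crosses {b,d} {s,t}) :: nat)"
proof -
  have h: "a<c" "b<d" "a<d" using assms by auto
  have da: "{d,a} = {a,d}" by auto
  have ne: "s \<noteq> a" "s \<noteq> b" "s \<noteq> c" "s \<noteq> d" "t \<noteq> a" "t \<noteq> b" "t \<noteq> c" "t \<noteq> d"
    using assms(5,6) by auto
  note cab = crosses_alt[OF assms(1) assms(4) ne(1,2,5,6)]
  note ccd = crosses_alt[OF assms(3) assms(4) ne(3,4,7,8)]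
  note cac = crosses_alt[OF h(1) assms(4) ne(1,3,5,7)]
  note cbd = crosses_alt[OF h(2) assms(4) ne(2,4,6,8)]
  note cad = crosses_alt[OF h(3) assms(4) ne(1,4,5,8)]
  note cbc = crosses_alt[OF assms(2) assms(4) ne(2,3,6,7)]
  have m: "b<s \<longrightarrow> a<s" "c<s \<longrightarrow> b<s" "d<s \<longrightarrow> c<s" "b<t \<longrightarrow> a<t" "c<t \<longrightarrow> b<t" "d<t \<longrightarrow> c<t"
    "a<s \<longrightarrow> a<t" "b<s \<longrightarrow> b<t" "c<s \<longrightarrow> c<t" "d<s \<longrightarrow> d<t" using assms by auto
  show "of_bool (crosses {a,b} {s,t}) + of_bool (crosses {c,d} {s,t})
    \<le> (of_bool (crosses {a,c} {s,t}) + of_bool (crosses {b,d} {s,t}) :: nat)"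
    unfolding cab ccd cac cbd
    by (rule bool_ineq(1)[OF m])
  show "of_bool (crosses {d,a} {s,t}) + of_bool (crosses {b,c} {s,t})
    \<le> (of_bool (crosses {a,c} {s,t}) + of_bool (crosses {b,d} {s,t}) :: nat)"
    unfolding da cad cbc cac cbd
    by (rule bool_ineq(2)[OF m])
qed

definition cr :: "chord set \<Rightarrow> nat" where
  "cr E = (\<Sum>x\<in>E. \<Sum>y\<in>E. of_bool (crosses x y))"

lemma crosses_sym: "crosses x y \<longleftrightarrow> crosses y x"
  unfolding crosses_def by blast

lemma crosses_irrefl: "\<not> crosses x x"
  unfolding crosses_def by (auto simp: doubleton_eq_iff)

lemma cr_decomp:
  assumes "finite R" "A \<notin> R" "B \<notin> R" "A \<noteq> B"
  shows "cr (insert A (insert B R)) = cr R + 2 * of_bool (crosses A B)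
     + 2 * (\<Sum>y\<in>R. of_bool (crosses A y) + of_bool (crosses B y))"
proof -
  have s: "(\<Sum>x\<in>R. of_bool (crosses x A)) = (\<Sum>x\<in>R. of_bool (crosses A x) :: nat)"
          "(\<Sum>x\<in>R. of_bool (crosses x B)) = (\<Sum>x\<in>R. of_bool (crosses B x) :: nat)"
    by (simp_all add: crosses_sym)
  have nA: "A \<notin> insert B R" using assms by auto
  have fi: "finite (insert B R)" using assms by auto
  have "cr (insert A (insert B R)) = (of_bool (crosses A A) + (of_bool (crosses A B) + (\<Sum>y\<in>R. of_bool (crosses A y)))) +
     ((of_bool (crosses B A) + (of_bool (crosses B B) + (\<Sum>y\<in>R. of_bool (crosses B y)))) +
     (\<Sum>x\<in>R. of_bool (crosses x A) + (of_bool (crosses x B) + (\<Sum>y\<in>R. of_bool (crosses x y)))))"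
    unfolding cr_def by (simp only: sum.insert[OF fi nA] sum.insert[OF assms(1,3)])
  also have "\<dots> = cr R + 2 * of_bool (crosses A B)
     + 2 * (\<Sum>y\<in>R. of_bool (crosses A y) + of_bool (crosses B y))"
    unfolding cr_def sum.distrib s by (simp add: crosses_irrefl crosses_sym[of B A])
  finally show ?thesis .
qed

lemma expand_facts:
  assumes cd: "chord_diagram E" and ac: "{a,c} \<in> E" and bd: "{b,d} \<in> E" and o: "a<b" "b<c" "c<d"
  defines "R \<equiv> E - {{a,c},{b,d}}"
  shows "chord_diagram (R \<union> {{a,b},{c,d}})" "chord_diagram (R \<union> {{d,a},{b,c}})"
    "pts (R \<union> {{a,b},{c,d}}) = pts E" "pts (R \<union> {{d,a},{b,c}}) = pts E"
    "cr (R \<union> {{a,b},{c,d}}) < cr E" "cr (R \<union> {{d,a},{b,c}}) < cr E"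
proof -
  have fE: "finite E" using cd chord_diagram_def by auto
  have fR: "finite R" using fE R_def by auto
  have Rdisj: "c' \<inter> {a,b,c,d} = {}" if "c' \<in> R" for c'
  proof -
    have "c' \<in> E" "c' \<noteq> {a,c}" "c' \<noteq> {b,d}" using that R_def by auto
    then have "c' \<inter> {a,c} = {}" "c' \<inter> {b,d} = {}" using cd_disj[OF cd] ac bd by blast+
    then show ?thesis by blast
  qed
  have nR: "{a,b} \<notin> R" "{c,d} \<notin> R" "{d,a} \<notin> R" "{b,c} \<notin> R" "{a,c} \<notin> R" "{b,d} \<notin> R"
    using Rdisj by blast+
  have E: "E = insert {a,c} (insert {b,d} R)" using ac bd R_def by auto
  have ne: "{a,c} \<noteq> {b,d}" "{a,b} \<noteq> {c,d}" "{d,a} \<noteq> {b,c}" using o by (auto simp: doubleton_eq_iff)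
  have u1: "R \<union> {{a,b},{c,d}} = insert {a,b} (insert {c,d} R)" by auto
  have u2: "R \<union> {{d,a},{b,c}} = insert {d,a} (insert {b,c} R)" by auto
  have cdR: "chord_diagram R" using cd_sub[OF cd] R_def by auto
  have c2: "card {a,b} = 2" "card {c,d} = 2" "card {d,a} = 2" "card {b,c} = 2" using o by auto
  show "chord_diagram (R \<union> {{a,b},{c,d}})" "chord_diagram (R \<union> {{d,a},{b,c}})"
    using cdR Rdisj c2 o fR unfolding chord_diagram_def by (auto simp: u1 u2)
  show "pts (R \<union> {{a,b},{c,d}}) = pts E" "pts (R \<union> {{d,a},{b,c}}) = pts E"
    unfolding pts_def E by auto
  have crAB: "crosses {a,c} {b,d}" using o by (simp add: crosses_iff)
  have ncr: "\<not> crosses {a,b} {c,d}" "\<not> crosses {d,a} {b,c}"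
    using o by (auto simp: crosses_iff insert_commute[of d a])
  have pw: "of_bool (crosses {a,b} y) + of_bool (crosses {c,d} y)
    \<le> (of_bool (crosses {a,c} y) + of_bool (crosses {b,d} y) :: nat)"
    "of_bool (crosses {d,a} y) + of_bool (crosses {b,c} y)
    \<le> (of_bool (crosses {a,c} y) + of_bool (crosses {b,d} y) :: nat)" if yR: "y \<in> R" for y
  proof -
    obtain s t where st: "s<t" "y = {s,t}" using cd_pair[OF cdR yR] by blast
    have "s \<notin> {a,b,c,d}" "t \<notin> {a,b,c,d}" using Rdisj[OF yR] st by auto
    then show "of_bool (crosses {a,b} y) + of_bool (crosses {c,d} y)
    \<le> (of_bool (crosses {a,c} y) + of_bool (crosses {b,d} y) :: nat)"
    "of_bool (crosses {d,a} y) + of_bool (crosses {b,c} y)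
    \<le> (of_bool (crosses {a,c} y) + of_bool (crosses {b,d} y) :: nat)"
      using pointwise[OF o st(1)] st(2) by auto
  qed
  have "cr E = cr R + 2 + 2 * (\<Sum>y\<in>R. of_bool (crosses {a,c} y) + of_bool (crosses {b,d} y))"
    unfolding E using cr_decomp[OF fR nR(5,6) ne(1)] crAB by simp
  moreover have "cr (R \<union> {{a,b},{c,d}}) = cr R + 2 * (\<Sum>y\<in>R. of_bool (crosses {a,b} y) + of_bool (crosses {c,d} y))"
    unfolding u1 using cr_decomp[OF fR nR(1,2) ne(2)] ncr by simp
  moreover have "cr (R \<union> {{d,a},{b,c}}) = cr R + 2 * (\<Sum>y\<in>R. of_bool (crosses {d,a} y) + of_bool (crosses {b,c} y))"
    unfolding u2 using cr_decomp[OF fR nR(3,4) ne(3)] ncr by simp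
  moreover have "(\<Sum>y\<in>R. of_bool (crosses {a,b} y) + of_bool (crosses {c,d} y)) \<le>
     (\<Sum>y\<in>R. of_bool (crosses {a,c} y) + of_bool (crosses {b,d} y) :: nat)"
     "(\<Sum>y\<in>R. of_bool (crosses {d,a} y) + of_bool (crosses {b,c} y)) \<le>
     (\<Sum>y\<in>R. of_bool (crosses {a,c} y) + of_bool (crosses {b,d} y) :: nat)"
    using pw by (auto intro!: sum_mono)
  ultimately show "cr (R \<union> {{a,b},{c,d}}) < cr E" "cr (R \<union> {{d,a},{b,c}}) < cr E" by linarith+
qed

lemma crossing_exists:
  assumes "chord_diagram E" "\<not> nonintersecting E"
  shows "\<exists>a b c d. {a,c} \<in> E \<and> {b,d} \<in> E \<and> a<b \<and> b<c \<and> c<d"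
proof -
  obtain x y where "x \<in> E" "y \<in> E" "crosses x y" using assms(2) unfolding nonintersecting_def by blast
  then show ?thesis unfolding crosses_def by blast
qed

lemma expands_exists: "chord_diagram E \<Longrightarrow> \<exists>k. expands E k"
proof (induction "cr E" arbitrary: E rule: less_induct)
  case less
  show ?case
  proof (cases "nonintersecting E")
    case True then show ?thesis using expands.finished by blast
  next
    case False
    then obtain a b c d where h: "{a,c} \<in> E" "{b,d} \<in> E" "a<b" "b<c" "c<d"
      using crossing_exists[OF less.prems] by blast
    note f = expand_facts[OF less.prems h]
    obtain k1 where "expands ((E - {{a,c},{b,d}}) \<union> {{a,b},{c,d}}) k1" using less.hyps[OF f(5) f(1)] by blast
    moreover obtain k2 where "expands ((E - {{a,c},{b,d}}) \<union> {{d,a},{b,c}}) k2" using less.hyps[OF f(6) f(2)] by blast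
    ultimately show ?thesis using expands.expand[OF h] by blast
  qed
qed

lemma expands_FF: "expands E k \<Longrightarrow> chord_diagram E \<Longrightarrow> int k = FF (\<lambda>_. 0) E"
proof (induction rule: expands.induct)
  case (finished E) then show ?case using FF_NC0 by simp
next
  case (expand a c E b d k1 k2)
  note f = expand_facts[OF expand.prems expand.hyps(1-5)]
  show ?case using expand.IH f(1,2) FF_add[OF expand.prems expand.hyps(1-5)] by simp
qed

lemma ex_FF: "chord_diagram E \<Longrightarrow> int (ex E) = FF (\<lambda>_. 0) E"
proof -
  assume cd: "chord_diagram E"
  obtain k where k: "expands E k" using expands_exists[OF cd] by blast
  have "ex E = k" unfolding ex_def
    apply (rule the_equality)
     apply (rule k)
    using expands_FF[OF _ cd] expands_FF[OF k cd] by (metis of_nat_eq_iff)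
  then show ?thesis using expands_FF[OF k cd] by simp
qed

definition cutf :: "int \<Rightarrow> nat \<Rightarrow> nat \<Rightarrow> int" where
  "cutf z t y = (if t \<le> y then z - 1 else 0)"

lemma pts_insert: "pts (insert c D) = c \<union> pts D"
  unfolding pts_def by auto

lemma chord_mm: "chord_diagram D \<Longrightarrow> c \<in> D \<Longrightarrow> c = {Min c, Max c} \<and> Min c < Max c"
  using cd_pair[of D c] by (auto simp: pair_minmax)

lemma cd_insert:
  assumes "chord_diagram D" "a<b" "a \<notin> pts D" "b \<notin> pts D"
  shows "chord_diagram (insert {a,b} D)"
  using assms unfolding chord_diagram_def pts_def by auto

lemma in_pts: "c \<in> D \<Longrightarrow> y \<in> c \<Longrightarrow> y \<in> pts D"
  unfolding pts_def by auto

lemma G_lemma: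
  assumes cd: "chord_diagram D" and nc: "nonintersecting D"
    and uD: "\<forall>y\<in>pts D. u < y" and uv: "u < v" and ut: "u < t" and vD: "v \<notin> pts D"
    and cutc: "\<forall>c\<in>D. Min c < t \<and> t \<le> Max c \<longrightarrow> Min c < v \<and> v < Max c"
    and ncut: "\<forall>c\<in>D. \<not>(Min c < t \<and> t \<le> Max c) \<longrightarrow> \<not>(Min c < v \<and> v < Max c)"
  shows "2 * FF (cutf z t) (insert {u,v} D) =
    (z+1)^(card {c\<in>D. Min c < t \<and> t \<le> Max c} + 1) +
    (if t \<le> v then 1 else -1) * (z-1)^(card {c\<in>D. Min c < t \<and> t \<le> Max c} + 1)"
  using assms
proof (induction "card D" arbitrary: D v rule: less_induct)
  case less
  let ?iscut = "\<lambda>c. Min c < t \<and> t \<le> Max c"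
  let ?\<alpha> = "cutf z t"
  have fD: "finite D" using less.prems(1) chord_diagram_def by auto
  have cdD: "chord_diagram D" by fact
  have ncD: "nonintersecting D" by fact
  have uvD: "u \<notin> pts D" using less.prems(3) by auto
  show ?case
  proof (cases "\<exists>c\<in>D. \<not> ?iscut c")
    case True
    then obtain c0 where c0: "c0 \<in> D \<and> \<not> ?iscut c0" by blast
    define len where "len c = Max c - Min c" for c :: "nat set"
    obtain c where cP: "c \<in> D \<and> \<not> ?iscut c" and cmin: "\<forall>c'. c' \<in> D \<and> \<not> ?iscut c' \<longrightarrow> len c \<le> len c'"
      using ex_has_least_nat[of "\<lambda>c. c \<in> D \<and> \<not> ?iscut c" c0 len] c0 by blast
    have cE: "c \<in> D" using cP by simp
    obtain p q where pq: "c = {p,q}" "p<q" using cd_pair[OF cdD cE] by blast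
    have pqmm: "Min c = p" "Max c = q" using pq by (simp_all add: pair_minmax)
    define D' where "D' = D - {c}"
    have cd': "chord_diagram D'" using cd_sub[OF cdD] D'_def by auto
    have nc': "nonintersecting D'" using ncD D'_def unfolding nonintersecting_def by auto
    have pq': "p \<notin> pts D'" "q \<notin> pts D'"
      using cd_disj[OF cdD cE] D'_def pq unfolding pts_def by blast+
    have pD: "p \<in> pts D" "q \<in> pts D" using in_pts[OF cE] pq by auto
    have nct: "\<not>(p < t \<and> t \<le> q)" using cP unfolding pqmm by simp
    have side: "?\<alpha> q = ?\<alpha> p"
      using nct pq(2) unfolding cutf_def by auto
    have "\<not>(Min c < v \<and> v < Max c)" using less.prems(8) cE cP by blast
    then have vbtw: "\<not>(p < v \<and> v < q)" unfolding pqmm .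
    have btw: "\<forall>y\<in>pts D'. \<not>(p<y \<and> y<q)"
    proof (intro ballI notI)
      fix y assume y: "y \<in> pts D'" and pyq: "p<y \<and> y<q"
      then obtain c' where c': "c' \<in> D'" "y \<in> c'" unfolding pts_def by auto
      have c'E: "c' \<in> D" using c' D'_def by auto
      obtain r s where rs: "c' = {r,s}" "r<s" using cd_pair[OF cdD c'E] by blast
      have rsmm: "Min c' = r" "Max c' = s" using rs by (simp_all add: pair_minmax)
      have "r \<notin> {p,q}" "s \<notin> {p,q}" using pq' c' rs unfolding pts_def by auto
      have nx: "\<not> crosses {p,q} {r,s}" "\<not> crosses {r,s} {p,q}"
        using ncD cE c'E pq rs unfolding nonintersecting_def by auto
      have lc: "len c = q - p" "len c' = s - r" unfolding len_def pqmm rsmm by auto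
      have ys: "y = r \<or> y = s" using c'(2) rs by auto
      have inside: "p < r \<and> s < q"
      proof (cases "y = r")
        case True
        show ?thesis
        proof (cases "q < s")
          case True
          then have "crosses {p,q} {r,s}" using pq(2) rs(2) pyq \<open>y = r\<close> by (simp add: crosses_iff)
          then show ?thesis using nx by simp
        next
          case False
          then show ?thesis using \<open>s \<notin> {p,q}\<close> pyq \<open>y = r\<close> by auto
        qed
      next
        case False
        then have "y = s" using ys by simp
        show ?thesis
        proof (cases "r < p")
          case True
          then have "crosses {r,s} {p,q}" using pq(2) rs(2) pyq \<open>y = s\<close> by (simp add: crosses_iff)
          then show ?thesis using nx by simp
        next
          case False
          then show ?thesis using \<open>r \<notin> {p,q}\<close> pyq \<open>y = s\<close> by auto
        qed
      qed
      have "\<not> ?iscut c'" using nct inside rs(2) unfolding rsmm by auto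
      then have "len c \<le> len c'" using cmin c'E by auto
      then show False using lc inside rs(2) by linarith
    qed
    have uvD': "u \<notin> pts D'" "v \<notin> pts D'" using uvD less.prems(6) D'_def unfolding pts_def by auto
    have cdu: "chord_diagram (insert {u,v} D')" by (rule cd_insert[OF cd' less.prems(4) uvD'])
    have pqn: "p \<notin> pts (insert {u,v} D')" "q \<notin> pts (insert {u,v} D')"
      using pq' pD less.prems(3) less.prems(6) unfolding pts_insert by auto
    have btw': "\<forall>y\<in>pts (insert {u,v} D'). \<not>(p<y \<and> y<q)"
      using btw vbtw pD less.prems(3) unfolding pts_insert by auto
    have DD: "D = insert c D'" using cE unfolding D'_def by blast
    have ins: "insert {u,v} D = insert {p,q} (insert {u,v} D')" unfolding DD pq(1) by (rule insert_commute)
    have "FF ?\<alpha> (insert {u,v} D) = FF ?\<alpha> (insert {u,v} D')"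
      unfolding ins FF_pair[OF cdu pq(2) pqn btw'] side by simp
    moreover have "card D' < card D" unfolding D'_def using fD cE by (rule card_Diff1_less)
    moreover have "{c'\<in>D'. ?iscut c'} = {c'\<in>D. ?iscut c'}" using cP unfolding D'_def by blast
    moreover have "2 * FF ?\<alpha> (insert {u,v} D') =
       (z+1)^(card {c\<in>D'. ?iscut c} + 1) + (if t \<le> v then 1 else -1) * (z-1)^(card {c\<in>D'. ?iscut c} + 1)"
    proof -
      have a1: "\<forall>y\<in>pts D'. u < y" using less.prems(3) unfolding D'_def pts_def by blast
      have a2: "\<forall>c\<in>D'. ?iscut c \<longrightarrow> Min c < v \<and> v < Max c" using less.prems(7) unfolding D'_def by blast
      have a3: "\<forall>c\<in>D'. \<not> ?iscut c \<longrightarrow> \<not>(Min c < v \<and> v < Max c)" using less.prems(8) unfolding D'_def by blast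
      show ?thesis by (rule less.hyps[OF \<open>card D' < card D\<close> cd' nc' a1 less.prems(4,5) uvD'(2) a2 a3])
    qed
    ultimately show ?thesis by simp
  next
    case False
    then have allcut: "\<forall>c\<in>D. ?iscut c" by blast
    have kD: "{c\<in>D. ?iscut c} = D" using allcut by auto
    show ?thesis
    proof (cases "D = {}")
      case True
      have "FF ?\<alpha> (insert {u,v} D) = (1 + ?\<alpha> v - ?\<alpha> u) * FF ?\<alpha> {}"
        using True FF_pair[of "{}" u v ?\<alpha>] less.prems(4) by (simp add: chord_diagram_def pts_def)
      then show ?thesis using True less.prems(5) by (simp add: FF_empty cutf_def)
    next
      case False
      define m where "m = Max (Min ` D)"
      have "m \<in> Min ` D" unfolding m_def using False fD by simp
      then obtain c1 where c1: "c1 \<in> D" "Min c1 = m" by auto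
      have c1max: "\<forall>c\<in>D. Min c \<le> Min c1" using c1 fD unfolding m_def by simp
      obtain p1 q1 where c1pq: "c1 = {p1,q1}" "p1 < q1" using cd_pair[OF cdD c1(1)] by blast
      have c1mm: "Min c1 = p1" "Max c1 = q1" using c1pq by (simp_all add: pair_minmax)
      have "Min c1 < v \<and> v < Max c1" "Min c1 < t \<and> t \<le> Max c1" using less.prems(7) allcut c1(1) by blast+
      then have p1v: "p1 < v" "v < q1" "p1 < t" "t \<le> q1" unfolding c1mm by auto
      define D' where "D' = D - {c1}"
      have cd': "chord_diagram D'" using cd_sub[OF cdD] D'_def by auto
      have nc': "nonintersecting D'" using ncD D'_def unfolding nonintersecting_def by auto
      have others: "Min c < p1 \<and> q1 < Max c" if "c \<in> D'" for c
      proof -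
        have cD: "c \<in> D" "c \<noteq> c1" using that D'_def by auto
        have disj: "c \<inter> c1 = {}" using cd_disj[OF cdD cD(1) c1(1) cD(2)] .
        have mm: "c = {Min c, Max c}" "Min c < Max c" using chord_mm[OF cdD cD(1)] by auto
        have "Min c \<noteq> p1" using disj mm c1pq by auto
        then have a1: "Min c < p1" using c1max cD c1mm by force
        have "Max c \<noteq> q1" using disj mm c1pq by auto
        moreover have "\<not> Max c < q1"
        proof
          assume "Max c < q1"
          moreover have "p1 < Max c" using p1v allcut cD by force
          ultimately have "crosses {Min c, Max c} {p1,q1}" using a1 mm(2) c1pq(2) by (simp add: crosses_iff)
          then show False using ncD cD c1 mm c1pq unfolding nonintersecting_def by metis
        qed
        ultimately show ?thesis using a1 by auto
      qed
      have ptsD': "y < p1 \<or> q1 < y" if yD: "y \<in> pts D'" for y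
      proof -
        obtain c where c: "c \<in> D'" "y \<in> c" using yD unfolding pts_def by auto
        have "c \<in> D" using c D'_def by auto
        then have "y = Min c \<or> y = Max c" using chord_mm[OF cdD] c by blast
        then show ?thesis using others[OF c(1)] by auto
      qed
      have p1q1D': "p1 \<notin> pts D'" "q1 \<notin> pts D'" using ptsD' c1pq(2) by force+
      have uD': "u \<notin> pts D'" "v \<notin> pts D'" using uvD less.prems(6) D'_def unfolding pts_def by auto
      have up1: "u < p1" "u < q1" using less.prems(3) in_pts[OF c1(1)] c1pq by auto
      have cdE: "chord_diagram (insert {u,v} D)" by (rule cd_insert[OF cdD less.prems(4) uvD less.prems(6)])
      have ne1: "{u,v} \<noteq> {p1,q1}" using up1 by (auto simp: doubleton_eq_iff)
      have Dins: "D = insert {p1,q1} D'" using c1(1) c1pq(1) unfolding D'_def by blast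
      have c1nD': "{p1,q1} \<notin> D'" using c1pq(1) unfolding D'_def by simp
      have uvnD: "{u,v} \<notin> D" using uvD unfolding pts_def by auto
      have e1: "(insert {u,v} D - {{u,v},{p1,q1}}) \<union> {{u,p1},{v,q1}} = insert {v,q1} (insert {u,p1} D')"
        using Dins uvnD ne1 c1nD' by auto
      have e2: "(insert {u,v} D - {{u,v},{p1,q1}}) \<union> {{q1,u},{p1,v}} = insert {p1,v} (insert {u,q1} D')"
        using Dins uvnD ne1 c1nD' by auto
      have add: "FF ?\<alpha> (insert {u,v} D) = FF ?\<alpha> (insert {v,q1} (insert {u,p1} D')) + FF ?\<alpha> (insert {p1,v} (insert {u,q1} D'))"
        using FF_add[OF cdE _ _ up1(1) p1v(1) p1v(2), of ?\<alpha>] Dins e1 e2 by simp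
      have cd1: "chord_diagram (insert {u,p1} D')" by (rule cd_insert[OF cd' up1(1) uD'(1) p1q1D'(1)])
      have cd2: "chord_diagram (insert {u,q1} D')" by (rule cd_insert[OF cd' up1(2) uD'(1) p1q1D'(2)])
      have f1: "FF ?\<alpha> (insert {v,q1} (insert {u,p1} D')) = (1 + ?\<alpha> q1 - ?\<alpha> v) * FF ?\<alpha> (insert {u,p1} D')"
      proof (rule FF_pair[OF cd1 p1v(2)])
        show "v \<notin> pts (insert {u, p1} D')" "q1 \<notin> pts (insert {u, p1} D')"
          using uD' p1q1D' uv p1v up1 unfolding pts_insert by auto
        show "\<forall>y\<in>pts (insert {u, p1} D'). \<not> (v < y \<and> y < q1)"
          using ptsD' p1v up1 uv unfolding pts_insert by fastforce
      qed
      have f2: "FF ?\<alpha> (insert {p1,v} (insert {u,q1} D')) = (1 + ?\<alpha> v - ?\<alpha> p1) * FF ?\<alpha> (insert {u,q1} D')"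
      proof (rule FF_pair[OF cd2 p1v(1)])
        show "p1 \<notin> pts (insert {u, q1} D')" "v \<notin> pts (insert {u, q1} D')"
          using uD' p1q1D' uv p1v up1 c1pq unfolding pts_insert by auto
        show "\<forall>y\<in>pts (insert {u, q1} D'). \<not> (p1 < y \<and> y < v)"
          using ptsD' p1v up1 uv unfolding pts_insert by fastforce
      qed
      have cardD': "card D' < card D" unfolding D'_def using fD c1(1) by (rule card_Diff1_less)
      have fD': "finite D'" unfolding D'_def using fD by simp
      have cardD: "card D = card D' + 1" using c1nD' fD' by (subst Dins) simp
      have kD': "{c\<in>D'. ?iscut c} = D'" using allcut unfolding D'_def by blast
      have uD'all: "\<forall>y\<in>pts D'. u < y" using less.prems(3) unfolding D'_def pts_def by blast
      have allcut': "\<forall>c\<in>D'. ?iscut c" using allcut unfolding D'_def by blast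
      have b2: "\<forall>c\<in>D'. ?iscut c \<longrightarrow> Min c < p1 \<and> p1 < Max c" using others c1pq(2) by fastforce
      have b2': "\<forall>c\<in>D'. ?iscut c \<longrightarrow> Min c < q1 \<and> q1 < Max c" using others c1pq(2) by fastforce
      have b3: "\<forall>c\<in>D'. \<not> ?iscut c \<longrightarrow> \<not>(Min c < p1 \<and> p1 < Max c)" using allcut' by blast
      have b3': "\<forall>c\<in>D'. \<not> ?iscut c \<longrightarrow> \<not>(Min c < q1 \<and> q1 < Max c)" using allcut' by blast
      have IH1: "2 * FF ?\<alpha> (insert {u,p1} D') = (z+1)^(card D' + 1) - (z-1)^(card D' + 1)"
        using less.hyps[OF cardD' cd' nc' uD'all up1(1) less.prems(5) p1q1D'(1) b2 b3] p1v(3)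
        unfolding kD' by simp
      have IH2: "2 * FF ?\<alpha> (insert {u,q1} D') = (z+1)^(card D' + 1) + (z-1)^(card D' + 1)"
        using less.hyps[OF cardD' cd' nc' uD'all up1(2) less.prems(5) p1q1D'(2) b2' b3'] p1v(4)
        unfolding kD' by simp
      have aq: "?\<alpha> q1 = z - 1" "?\<alpha> p1 = 0" using p1v unfolding cutf_def by auto
      show ?thesis
      proof (cases "t \<le> v")
        case True
        then have av: "?\<alpha> v = z - 1" unfolding cutf_def by simp
        have "2 * FF ?\<alpha> (insert {u,v} D) = 1 * (2 * FF ?\<alpha> (insert {u,p1} D')) + z * (2 * FF ?\<alpha> (insert {u,q1} D'))"
          unfolding add f1 f2 aq av by (simp add: algebra_simps)
        also have "\<dots> = (z+1)^(card D + 1) + (z-1)^(card D + 1)"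
          unfolding IH1 IH2 cardD by (simp add: algebra_simps)
        finally show ?thesis using True kD by simp
      next
        case False
        then have av: "?\<alpha> v = 0" unfolding cutf_def by simp
        have "2 * FF ?\<alpha> (insert {u,v} D) = z * (2 * FF ?\<alpha> (insert {u,p1} D')) + 1 * (2 * FF ?\<alpha> (insert {u,q1} D'))"
          unfolding add f1 f2 aq av by (simp add: algebra_simps)
        also have "\<dots> = (z+1)^(card D + 1) - (z-1)^(card D + 1)"
          unfolding IH1 IH2 cardD by (simp add: algebra_simps)
        finally show ?thesis using False kD by simp
      qed
    qed
  qed
qed

lemma prod_if_const: "finite D \<Longrightarrow> (\<Prod>c\<in>D. if P c then w else 1) = (w::int) ^ card {c\<in>D. P c}"
proof (induction D rule: finite_induct)
  case empty then show ?case by simp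
next
  case (insert x F)
  have "{c \<in> insert x F. P c} = (if P x then insert x {c\<in>F. P c} else {c\<in>F. P c})" by auto
  then show ?case using insert by auto
qed

lemma main_local:
  assumes "chord_diagram D" "\<forall>y\<in>pts D. u<y" "u<v" "v \<notin> pts D"
  shows "2 * FF (cutf z v) (insert {u,v} D) = (z+1) * FF (cutf (z+1) v) D + (z-1) * FF (cutf (z-1) v) D"
  using assms
proof (induction "cr D" arbitrary: D rule: less_induct)
  case less
  have cdD: "chord_diagram D" by fact
  have uD: "u \<notin> pts D" using less.prems(2) by auto
  show ?case
  proof (cases "nonintersecting D")
    case True
    let ?P = "\<lambda>c. Min c < v \<and> v \<le> Max c"
    have cutc: "\<forall>c\<in>D. ?P c \<longrightarrow> Min c < v \<and> v < Max c"
    proof (intro ballI impI)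
      fix c assume c: "c \<in> D" "?P c"
      have "Max c \<in> pts D" using chord_mm[OF cdD c(1)] in_pts[OF c(1)] by (metis insertI1 insert_commute)
      then have "Max c \<noteq> v" using less.prems(4) by auto
      then show "Min c < v \<and> v < Max c" using c(2) by auto
    qed
    have ncut: "\<forall>c\<in>D. \<not> ?P c \<longrightarrow> \<not>(Min c < v \<and> v < Max c)" by auto
    have G: "2 * FF (cutf z v) (insert {u,v} D) = (z+1)^(card {c\<in>D. ?P c} + 1) + (z-1)^(card {c\<in>D. ?P c} + 1)"
      using G_lemma[OF cdD True less.prems(2,3,3,4) cutc ncut, of z] by simp
    have fD: "finite D" using cdD chord_diagram_def by auto
    have pw: "FF (cutf w v) D = w ^ card {c\<in>D. ?P c}" for w
    proof -
      have "FF (cutf w v) D = (\<Prod>c\<in>D. 1 + cutf w v (Max c) - cutf w v (Min c))"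
        by (rule FF_NC[OF cdD True])
      also have "\<dots> = (\<Prod>c\<in>D. if ?P c then w else 1)"
      proof (rule prod.cong[OF refl])
        fix c assume "c \<in> D"
        then have "Min c < Max c" using chord_mm[OF cdD] by blast
        then show "1 + cutf w v (Max c) - cutf w v (Min c) = (if ?P c then w else 1)"
          unfolding cutf_def by auto
      qed
      also have "\<dots> = w ^ card {c\<in>D. ?P c}" by (rule prod_if_const[OF fD])
      finally show ?thesis .
    qed
    show ?thesis unfolding G pw by (simp add: algebra_simps)
  next
    case False
    then obtain a b c d where h: "{a,c} \<in> D" "{b,d} \<in> D" "a<b" "b<c" "c<d"
      using crossing_exists[OF cdD] by blast
    note f = expand_facts[OF cdD h]
    define D1 where "D1 = (D - {{a,c},{b,d}}) \<union> {{a,b},{c,d}}"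
    define D2 where "D2 = (D - {{a,c},{b,d}}) \<union> {{d,a},{b,c}}"
    have cdE: "chord_diagram (insert {u,v} D)" by (rule cd_insert[OF cdD less.prems(3) uD less.prems(4)])
    have hE: "{a,c} \<in> insert {u,v} D" "{b,d} \<in> insert {u,v} D" using h by auto
    have neq: "{u,v} \<noteq> {a,c}" "{u,v} \<noteq> {b,d}" using uD in_pts[OF h(1)] in_pts[OF h(2)] by auto
    have e1: "(insert {u,v} D - {{a,c},{b,d}}) \<union> {{a,b},{c,d}} = insert {u,v} D1"
      unfolding D1_def using neq by auto
    have e2: "(insert {u,v} D - {{a,c},{b,d}}) \<union> {{d,a},{b,c}} = insert {u,v} D2"
      unfolding D2_def using neq by auto
    have addE: "FF (cutf z v) (insert {u,v} D) = FF (cutf z v) (insert {u,v} D1) + FF (cutf z v) (insert {u,v} D2)"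
      using FF_add[OF cdE hE h(3-5), of "cutf z v"] unfolding e1 e2 .
    have addD: "FF (cutf w v) D = FF (cutf w v) D1 + FF (cutf w v) D2" for w
      using FF_add[OF cdD h, of "cutf w v"] unfolding D1_def D2_def .
    have IH1: "2 * FF (cutf z v) (insert {u,v} D1) = (z+1) * FF (cutf (z+1) v) D1 + (z-1) * FF (cutf (z-1) v) D1"
      using less.hyps[OF f(5)[folded D1_def] f(1)[folded D1_def]] less.prems(2-4) f(3)[folded D1_def] by simp
    have IH2: "2 * FF (cutf z v) (insert {u,v} D2) = (z+1) * FF (cutf (z+1) v) D2 + (z-1) * FF (cutf (z-1) v) D2"
      using less.hyps[OF f(6)[folded D2_def] f(2)[folded D2_def]] less.prems(2-4) f(4)[folded D2_def] by simp
    show ?thesis unfolding addE addD using IH1 IH2 by (simp add: algebra_simps)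
  qed
qed

lemma ncross_split:
  assumes nc: "n_crossing (Suc n) E"
  obtains u v E' where "E = insert {u,v} E'" "{u,v} \<notin> E'" "u<v" "n_crossing n E'"
    "\<forall>c\<in>E'. u < Min c \<and> Min c < v \<and> v < Max c" "\<forall>y\<in>pts E'. u<y" "v \<notin> pts E'"
proof -
  have cd: "chord_diagram E" and cE: "card E = Suc n" and cr: "\<forall>x\<in>E. \<forall>y\<in>E. x \<noteq> y \<longrightarrow> crosses x y"
    using nc unfolding n_crossing_def by auto
  have fE: "finite E" using cd chord_diagram_def by auto
  have ne: "E \<noteq> {}" using cE by auto
  have fP: "finite (pts E)" by (rule cd_finite[OF cd])
  obtain x0 where x0: "x0 \<in> E" using ne by auto
  have "Min x0 \<in> pts E" using chord_mm[OF cd x0] in_pts[OF x0] by (metis insertI1)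
  then have neP: "pts E \<noteq> {}" by auto
  define u where "u = Min (pts E)"
  have uP: "u \<in> pts E" unfolding u_def using fP neP by simp
  have umin: "\<forall>y\<in>pts E. u \<le> y" unfolding u_def using fP by simp
  obtain x where x: "x \<in> E" "u \<in> x" using uP unfolding pts_def by auto
  obtain a v where av: "x = {a,v}" "a<v" using cd_pair[OF cd x(1)] by blast
  have "a \<in> pts E" using in_pts[OF x(1)] av by auto
  then have "u \<le> a" using umin by auto
  moreover have "u = a \<or> u = v" using x(2) av by auto
  ultimately have ua: "u = a" using av(2) by auto
  define E' where "E' = E - {x}"
  have cd': "chord_diagram E'" using cd_sub[OF cd] E'_def by auto
  have xE: "E = insert {u,v} E'" using x(1) av ua unfolding E'_def by blast
  have xnE: "{u,v} \<notin> E'" using av ua unfolding E'_def by simp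
  have cardE': "card E' = n" using cE x(1) fE unfolding E'_def by simp
  have nc': "n_crossing n E'" unfolding n_crossing_def using cd' cardE' cr unfolding E'_def by blast
  have disj: "c \<inter> {u,v} = {}" if "c \<in> E'" for c
    using cd_disj[OF cd, of c x] that x(1) av ua unfolding E'_def by blast
  have struct: "\<forall>c\<in>E'. u < Min c \<and> Min c < v \<and> v < Max c"
  proof
    fix c assume cE': "c \<in> E'"
    then have cE0: "c \<in> E" "c \<noteq> x" unfolding E'_def by auto
    obtain r s where rs: "c = {r,s}" "r<s" using cd_pair[OF cd cE0(1)] by blast
    have "crosses {u,v} {r,s}" using cr x(1) cE0 av ua rs by metis
    then have "(u<r \<and> r<v \<and> v<s) \<or> (r<u \<and> u<s \<and> s<v)" using crosses_iff[OF av(2)[folded ua] rs(2)] by simp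
    moreover have "u \<le> r" using umin in_pts[OF cE0(1)] rs by auto
    ultimately have "u<r \<and> r<v \<and> v<s" by auto
    then show "u < Min c \<and> Min c < v \<and> v < Max c" using rs by (simp add: pair_minmax)
  qed
  have upos: "\<forall>y\<in>pts E'. u<y"
  proof
    fix y assume "y \<in> pts E'"
    then obtain c where c: "c \<in> E'" "y \<in> c" unfolding pts_def by auto
    have "y \<in> pts E" using c unfolding E'_def pts_def by auto
    then have "u \<le> y" using umin by auto
    moreover have "y \<noteq> u" using disj[OF c(1)] c(2) by auto
    ultimately show "u < y" by auto
  qed
  have vn: "v \<notin> pts E'" using disj unfolding pts_def by blast
  show ?thesis using that[OF xE xnE av(2)[folded ua] nc' struct upos vn] .
qed

fun Qr :: "nat \<Rightarrow> int \<Rightarrow> int" where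
  "Qr 0 z = 1"
| "Qr (Suc n) z = ((z+1) * Qr n (z+1) + (z-1) * Qr n (z-1)) div 2"

lemma ncross_FF: "n_crossing n E \<Longrightarrow> \<forall>c\<in>E. Min c < t \<and> t \<le> Max c \<Longrightarrow> FF (cutf z t) E = Qr n z"
proof (induction n arbitrary: E t z)
  case 0
  then have "E = {}" unfolding n_crossing_def chord_diagram_def by auto
  then show ?case by (simp add: FF_empty)
next
  case (Suc n)
  obtain u v E' where s: "E = insert {u,v} E'" "{u,v} \<notin> E'" "u<v" "n_crossing n E'"
    "\<forall>c\<in>E'. u < Min c \<and> Min c < v \<and> v < Max c" "\<forall>y\<in>pts E'. u<y" "v \<notin> pts E'"
    using ncross_split[OF Suc.prems(1)] by blast
  have cd': "chord_diagram E'" using s(4) unfolding n_crossing_def by auto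
  have "Min {u,v} < t \<and> t \<le> Max {u,v}" using Suc.prems(2) s(1) by auto
  then have tuv: "u < t" "t \<le> v" using s(3) by (auto simp: pair_minmax)
  have tc: "\<forall>c\<in>E'. Min c < t \<and> t \<le> Max c" using Suc.prems(2) s(1) by auto
  have cong: "FF (cutf z t) E = FF (cutf z v) E"
  proof (rule FF_cong)
    fix y assume "y \<in> pts E"
    then have "y = u \<or> y = v \<or> (\<exists>c\<in>E'. y = Min c \<or> y = Max c)"
      unfolding s(1) pts_insert pts_def using chord_mm[OF cd'] by blast
    then show "cutf z t y = cutf z v y"
      using tuv s(5) tc unfolding cutf_def by fastforce
  qed
  have vgood: "\<forall>c\<in>E'. Min c < v \<and> v \<le> Max c" using s(5) by auto
  have "2 * FF (cutf z v) E = (z+1) * FF (cutf (z+1) v) E' + (z-1) * FF (cutf (z-1) v) E'"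
    unfolding s(1) by (rule main_local[OF cd' s(6) s(3) s(7)])
  also have "\<dots> = (z+1) * Qr n (z+1) + (z-1) * Qr n (z-1)"
    using Suc.IH[OF s(4) vgood] by simp
  finally show ?case unfolding cong by simp
qed

definition good :: "nat \<Rightarrow> (nat \<times> nat \<Rightarrow> nat) set" where
  "good n = {M \<in> zero_one_fillings n. good_filling n M}"

definition freec :: "nat \<Rightarrow> (nat \<times> nat \<Rightarrow> nat) \<Rightarrow> nat set" where
  "freec n M = {j. j < n \<and> (\<forall>i. (i,j) \<in> staircase n \<longrightarrow> M (i,j) = 0)}"

definition Yp :: "nat \<Rightarrow> int \<Rightarrow> int" where
  "Yp n z = (\<Sum>M\<in>good n. z ^ card (freec n M))"

definition build :: "nat \<Rightarrow> (nat \<times> nat \<Rightarrow> nat) \<Rightarrow> nat set \<Rightarrow> (nat \<times> nat \<Rightarrow> nat)" where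
  "build n T S = restrict (\<lambda>(i,j). if i = 0 then (if j \<in> S then 1 else 0) else T (i - 1, j)) (staircase (Suc n))"

definition topr :: "nat \<Rightarrow> (nat \<times> nat \<Rightarrow> nat) \<Rightarrow> (nat \<times> nat \<Rightarrow> nat)" where
  "topr n M = restrict (\<lambda>(i,j). M (Suc i, j)) (staircase n)"

definition row0 :: "nat \<Rightarrow> (nat \<times> nat \<Rightarrow> nat) \<Rightarrow> nat set" where
  "row0 n M = {j. j < Suc n \<and> M (0,j) = 1}"

lemma st_iff: "(i,j) \<in> staircase n \<longleftrightarrow> i < n \<and> j < n - i"
  unfolding staircase_def by simp

lemma st_fin: "finite (staircase n)"
proof -
  have "staircase n \<subseteq> {..<n} \<times> {..<n}" unfolding staircase_def by auto
  then show ?thesis by (rule finite_subset) simp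
qed

lemma good_fin: "finite (good n)"
proof -
  have "finite (staircase n \<rightarrow>\<^sub>E {0,1::nat})" using st_fin by (intro finite_PiE) auto
  then show ?thesis unfolding good_def zero_one_fillings_def by (rule finite_subset[rotated]) auto
qed

lemma col_set: "{i. (i,j) \<in> staircase (Suc n)} = (if j \<le> n then {0} else {}) \<union> Suc ` {i. (i,j) \<in> staircase n}"
proof -
  have "x \<in> {i. (i,j) \<in> staircase (Suc n)} \<longleftrightarrow> x \<in> (if j \<le> n then {0} else {}) \<union> Suc ` {i. (i,j) \<in> staircase n}" for x
    by (cases x) (auto simp: st_iff)
  then show ?thesis by blast
qed

lemma col_fin: "finite {i. (i,j) \<in> staircase n}"
  by (rule finite_subset[of _ "{..<n}"]) (auto simp: st_iff)

lemma col_sum: "(\<Sum>i\<in>{i. (i,j) \<in> staircase (Suc n)}. f i) =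
   (if j \<le> n then f 0 else 0) + (\<Sum>i\<in>{i. (i,j) \<in> staircase n}. f (Suc i) :: nat)"
proof -
  have d: "(if j \<le> n then {0} else {}) \<inter> Suc ` {i. (i,j) \<in> staircase n} = {}" by auto
  have "(\<Sum>i\<in>{i. (i,j) \<in> staircase (Suc n)}. f i) = (\<Sum>i\<in>(if j \<le> n then {0} else {}). f i) +
     (\<Sum>i\<in>Suc ` {i. (i,j) \<in> staircase n}. f i)"
    unfolding col_set by (rule sum.union_disjoint) (use d col_fin in auto)
  also have "(\<Sum>i\<in>Suc ` {i. (i,j) \<in> staircase n}. f i) = (\<Sum>i\<in>{i. (i,j) \<in> staircase n}. f (Suc i))"
    by (subst sum.reindex) auto
  finally show ?thesis by simp
qed

lemma sum_ind: "S \<subseteq> {..<(m::nat)} \<Longrightarrow> (\<Sum>j<m. if j \<in> S then 1 else 0) = (card S :: nat)"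
proof -
  assume a: "S \<subseteq> {..<m}"
  have "(\<Sum>j<m. if j \<in> S then 1 else 0) = (\<Sum>j\<in>{j\<in>{..<m}. j \<in> S}. 1::nat)"
    by (rule sum.inter_filter[symmetric]) simp
  also have "{j\<in>{..<m}. j \<in> S} = S" using a by auto
  finally show ?thesis by simp
qed

lemma even_sum:
  assumes "finite A"
  shows "2 * (\<Sum>S\<in>{S. S \<subseteq> A \<and> even (card S)}. z ^ (card A - card S)) = (z+1)^card A + ((z::int)-1)^card A"
proof -
  have e1: "(z+1)^card A = (\<Sum>S\<in>Pow A. z ^ (card A - card S))"
  proof -
    have "(z+1)^card A = (\<Prod>x\<in>A. 1 + z)" by (simp add: add.commute)
    also have "\<dots> = (\<Sum>S\<in>Pow A. (\<Prod>x\<in>S. 1) * (\<Prod>x\<in>A-S. z))" by (rule prod_add[OF assms])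
    also have "\<dots> = (\<Sum>S\<in>Pow A. z ^ (card A - card S))"
      by (rule sum.cong[OF refl]) (metis PowD assms card_Diff_subset finite_subset prod.neutral_const prod_constant mult_1)
    finally show ?thesis .
  qed
  have e2: "(z-1)^card A = (\<Sum>S\<in>Pow A. (-1)^card S * z ^ (card A - card S))"
  proof -
    have "(z-1)^card A = (\<Prod>x\<in>A. -1 + z)" by simp
    also have "\<dots> = (\<Sum>S\<in>Pow A. (\<Prod>x\<in>S. -1) * (\<Prod>x\<in>A-S. z))" by (rule prod_add[OF assms])
    also have "\<dots> = (\<Sum>S\<in>Pow A. (-1)^card S * z ^ (card A - card S))"
      by (rule sum.cong[OF refl]) (metis PowD assms card_Diff_subset finite_subset prod.neutral_const prod_constant mult_1)
    finally show ?thesis .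
  qed
  have st: "{S. S \<subseteq> A \<and> even (card S)} = {S\<in>Pow A. even (card S)}" by auto
  have "(\<Sum>S\<in>{S\<in>Pow A. even (card S)}. z ^ (card A - card S)) =
     (\<Sum>S\<in>Pow A. if even (card S) then z ^ (card A - card S) else 0)"
    by (rule sum.inter_filter) (simp add: assms)
  then have "(\<Sum>S\<in>{S. S \<subseteq> A \<and> even (card S)}. z ^ (card A - card S)) =
     (\<Sum>S\<in>Pow A. if even (card S) then z ^ (card A - card S) else 0)"
    unfolding st .
  then have "2 * (\<Sum>S\<in>{S. S \<subseteq> A \<and> even (card S)}. z ^ (card A - card S)) =
     (\<Sum>S\<in>Pow A. z ^ (card A - card S) + (-1)^card S * z ^ (card A - card S))"
    by (simp add: sum_distrib_left) (rule sum.cong[OF refl], auto)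
  also have "\<dots> = (z+1)^card A + (z-1)^card A" unfolding e1 e2 sum.distrib ..
  finally show ?thesis .
qed

lemma zo_iff: "M \<in> zero_one_fillings n \<longleftrightarrow> (\<forall>x\<in>staircase n. M x \<in> {0,1}) \<and> M \<in> extensional (staircase n)"
  unfolding zero_one_fillings_def by (simp add: PiE_iff)

lemma good_iff: "M \<in> good n \<longleftrightarrow> (\<forall>x\<in>staircase n. M x \<in> {0,1}) \<and> M \<in> extensional (staircase n) \<and>
   (\<forall>j. (\<Sum>i\<in>{i. (i, j) \<in> staircase n}. M (i, j)) \<le> 1) \<and> (\<forall>i<n. even (\<Sum>j<n - i. M (i, j)))"
  unfolding good_def good_filling_def zo_iff by auto

lemma build_simps:
  "j < Suc n \<Longrightarrow> build n T S (0,j) = (if j \<in> S then 1 else 0)"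
  "(i,j) \<in> staircase n \<Longrightarrow> build n T S (Suc i, j) = T (i,j)"
  unfolding build_def by (auto simp: st_iff)

lemma col_build: "(\<Sum>i\<in>{i. (i,j) \<in> staircase (Suc n)}. build n T S (i,j)) =
   (if j \<le> n then (if j \<in> S then 1 else 0) else 0) + (\<Sum>i\<in>{i. (i,j) \<in> staircase n}. T (i,j))"
  unfolding col_sum by (simp add: build_simps)

lemma col_empty: "{i. (i,n) \<in> staircase n} = {}"
  by (auto simp: st_iff)

lemma L1:
  assumes T: "T \<in> good n" and S: "S \<subseteq> insert n (freec n T)" "even (card S)"
  shows "build n T S \<in> good (Suc n)"
proof -
  have Tg: "\<forall>x\<in>staircase n. T x \<in> {0,1}" "(\<forall>j. (\<Sum>i\<in>{i. (i, j) \<in> staircase n}. T (i, j)) \<le> 1)"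
    "(\<forall>i<n. even (\<Sum>j<n - i. T (i, j)))" using T unfolding good_iff by auto
  have Sn: "S \<subseteq> {..<Suc n}" using S(1) unfolding freec_def by auto
  have v: "\<forall>x\<in>staircase (Suc n). build n T S x \<in> {0,1}"
  proof
    fix x assume x: "x \<in> staircase (Suc n)"
    obtain i j where ij: "x = (i,j)" by fastforce
    show "build n T S x \<in> {0,1}"
    proof (cases i)
      case 0 then show ?thesis using x ij by (auto simp: build_simps st_iff)
    next
      case (Suc i')
      then have "(i',j) \<in> staircase n" using x ij by (auto simp: st_iff)
      then show ?thesis using Tg(1) ij Suc by (simp add: build_simps)
    qed
  qed
  have e: "build n T S \<in> extensional (staircase (Suc n))" unfolding build_def by simp
  have c: "(\<Sum>i\<in>{i. (i, j) \<in> staircase (Suc n)}. build n T S (i, j)) \<le> 1" for j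
  proof (cases "j \<in> S")
    case True
    have "(\<Sum>i\<in>{i. (i,j) \<in> staircase n}. T (i,j)) = 0"
    proof (cases "j = n")
      case True then show ?thesis by (simp add: col_empty)
    next
      case False
      then have "j \<in> freec n T" using S(1) \<open>j \<in> S\<close> by auto
      then show ?thesis unfolding freec_def by simp
    qed
    then show ?thesis unfolding col_build by simp
  next
    case False
    then show ?thesis unfolding col_build using Tg(2) by simp
  qed
  have r: "even (\<Sum>j<Suc n - i. build n T S (i, j))" if i: "i < Suc n" for i
  proof (cases i)
    case 0
    have "(\<Sum>j<Suc n - i. build n T S (i, j)) = (\<Sum>j<Suc n. if j \<in> S then 1 else 0)"
      using 0 by (simp add: build_simps)
    also have "\<dots> = card S" by (rule sum_ind[OF Sn])
    finally show ?thesis using S(2) by simp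
  next
    case (Suc i')
    have pt: "build n T S (i, j) = T (i', j)" if "j < n - i'" for j
    proof -
      have "(i',j) \<in> staircase n" using that Suc i by (simp add: st_iff)
      then show ?thesis using Suc by (simp add: build_simps)
    qed
    have "(\<Sum>j<Suc n - i. build n T S (i, j)) = (\<Sum>j<n - i'. T (i', j))"
      using Suc pt by (intro sum.cong) auto
    then show ?thesis using Tg(3) Suc i by simp
  qed
  show ?thesis unfolding good_iff using v e c r by blast
qed

lemma L2:
  assumes M: "M \<in> good (Suc n)"
  shows "topr n M \<in> good n" "row0 n M \<subseteq> insert n (freec n (topr n M))" "even (card (row0 n M))"
    "build n (topr n M) (row0 n M) = M"
proof -
  have Mg: "\<forall>x\<in>staircase (Suc n). M x \<in> {0,1}" "M \<in> extensional (staircase (Suc n))"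
    "(\<forall>j. (\<Sum>i\<in>{i. (i, j) \<in> staircase (Suc n)}. M (i, j)) \<le> 1)"
    "(\<forall>i<Suc n. even (\<Sum>j<Suc n - i. M (i, j)))" using M unfolding good_iff by auto
  have topv: "topr n M (i,j) = M (Suc i, j)" if "(i,j) \<in> staircase n" for i j
    using that unfolding topr_def by simp
  have sts: "(Suc i, j) \<in> staircase (Suc n)" if "(i,j) \<in> staircase n" for i j
    using that by (simp add: st_iff)
  have colM: "(\<Sum>i\<in>{i. (i,j) \<in> staircase (Suc n)}. M (i,j)) =
     (if j \<le> n then M (0,j) else 0) + (\<Sum>i\<in>{i. (i,j) \<in> staircase n}. topr n M (i,j))" for j
    unfolding col_sum by (simp add: topv)
  show g: "topr n M \<in> good n"
  proof -
    have v: "\<forall>x\<in>staircase n. topr n M x \<in> {0,1}"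
      using Mg(1) sts topv by fastforce
    have e: "topr n M \<in> extensional (staircase n)" unfolding topr_def by simp
    have c: "(\<Sum>i\<in>{i. (i, j) \<in> staircase n}. topr n M (i, j)) \<le> 1" for j
      using Mg(3) colM[of j] by (metis add_leE)
    have r: "even (\<Sum>j<n - i. topr n M (i, j))" if "i<n" for i
    proof -
      have "(\<Sum>j<n - i. topr n M (i, j)) = (\<Sum>j<Suc n - Suc i. M (Suc i, j))"
        using that by (intro sum.cong) (auto simp: topv st_iff)
      then show ?thesis using Mg(4)[rule_format, of "Suc i"] that by simp
    qed
    show ?thesis unfolding good_iff using v e c r by blast
  qed
  show "row0 n M \<subseteq> insert n (freec n (topr n M))"
  proof
    fix j assume j: "j \<in> row0 n M"
    then have j1: "j < Suc n" "M (0,j) = 1" unfolding row0_def by auto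
    show "j \<in> insert n (freec n (topr n M))"
    proof (cases "j = n")
      case False
      then have jn: "j < n" using j1 by auto
      have "(\<Sum>i\<in>{i. (i,j) \<in> staircase n}. topr n M (i,j)) = 0"
        using Mg(3)[rule_format, of j] colM[of j] j1 jn by simp
      then have "\<forall>i\<in>{i. (i,j) \<in> staircase n}. topr n M (i,j) = 0"
        using col_fin by simp
      then show ?thesis unfolding freec_def using jn by auto
    qed simp
  qed
  have row: "(\<Sum>j<Suc n. M (0,j)) = card (row0 n M)"
  proof -
    have "(\<Sum>j<Suc n. M (0,j)) = (\<Sum>j<Suc n. if j \<in> row0 n M then 1 else 0)"
    proof (rule sum.cong[OF refl])
      fix j assume "j \<in> {..<Suc n}"
      then have "(0,j) \<in> staircase (Suc n)" by (simp add: st_iff)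
      then have "M (0,j) \<in> {0,1}" using Mg(1) by blast
      then show "M (0,j) = (if j \<in> row0 n M then 1 else 0)" using \<open>j \<in> {..<Suc n}\<close> unfolding row0_def by auto
    qed
    also have "\<dots> = card (row0 n M)" by (rule sum_ind) (auto simp: row0_def)
    finally show ?thesis .
  qed
  have e0: "even (\<Sum>j<Suc n - 0. M (0, j))" using Mg(4) by blast
  then show "even (card (row0 n M))" using row by (metis diff_zero)
  show "build n (topr n M) (row0 n M) = M"
  proof
    fix x :: "nat \<times> nat"
    obtain i j where ij: "x = (i,j)" by fastforce
    show "build n (topr n M) (row0 n M) x = M x"
    proof (cases "x \<in> staircase (Suc n)")
      case False
      then have "M x = undefined" using Mg(2) by (auto simp: extensional_def ij)
      then show ?thesis using False unfolding build_def by simp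
    next
      case True
      show ?thesis
      proof (cases i)
        case 0
        then have "j < Suc n" using True ij by (simp add: st_iff)
        moreover have "M (0,j) \<in> {0,1}" using Mg(1) True ij 0 by blast
        ultimately show ?thesis using ij 0 by (auto simp: build_simps row0_def)
      next
        case (Suc i')
        then have "(i',j) \<in> staircase n" using True ij by (auto simp: st_iff)
        then show ?thesis using ij Suc by (simp add: build_simps topv)
      qed
    qed
  qed
qed

lemma L3:
  assumes T: "T \<in> good n" and S: "S \<subseteq> insert n (freec n T)"
  shows "topr n (build n T S) = T" "row0 n (build n T S) = S"
proof -
  have Te: "T \<in> extensional (staircase n)" using T unfolding good_iff by auto
  have Sn: "S \<subseteq> {..<Suc n}" using S unfolding freec_def by auto
  show "topr n (build n T S) = T"
  proof
    fix x :: "nat \<times> nat"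
    obtain i j where ij: "x = (i,j)" by fastforce
    show "topr n (build n T S) x = T x"
      using Te ij unfolding topr_def by (auto simp: build_simps extensional_def)
  qed
  show "row0 n (build n T S) = S"
    using Sn unfolding row0_def by (auto simp: build_simps split: if_splits)
qed

lemma L4:
  assumes S: "S \<subseteq> insert n (freec n T)"
  shows "freec (Suc n) (build n T S) = insert n (freec n T) - S"
proof -
  have "j \<in> freec (Suc n) (build n T S) \<longleftrightarrow> j \<in> insert n (freec n T) - S" for j
  proof (cases "j < Suc n")
    case True
    have "(\<forall>i. (i,j) \<in> staircase (Suc n) \<longrightarrow> build n T S (i,j) = 0) \<longleftrightarrow>
          j \<notin> S \<and> (\<forall>i. (i,j) \<in> staircase n \<longrightarrow> T (i,j) = 0)"
    proof
      assume a: "\<forall>i. (i,j) \<in> staircase (Suc n) \<longrightarrow> build n T S (i,j) = 0"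
      have "(0,j) \<in> staircase (Suc n)" using True by (simp add: st_iff)
      then have "j \<notin> S" using a True build_simps(1)[OF True, of T S] by auto
      moreover have "T (i,j) = 0" if "(i,j) \<in> staircase n" for i
        using a[rule_format, of "Suc i"] that by (simp add: build_simps st_iff)
      ultimately show "j \<notin> S \<and> (\<forall>i. (i,j) \<in> staircase n \<longrightarrow> T (i,j) = 0)" by blast
    next
      assume a: "j \<notin> S \<and> (\<forall>i. (i,j) \<in> staircase n \<longrightarrow> T (i,j) = 0)"
      show "\<forall>i. (i,j) \<in> staircase (Suc n) \<longrightarrow> build n T S (i,j) = 0"
      proof (intro allI impI)
        fix i assume i: "(i,j) \<in> staircase (Suc n)"
        show "build n T S (i,j) = 0"
        proof (cases i)
          case 0 then show ?thesis using a True by (simp add: build_simps)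
        next
          case (Suc i')
          then have "(i',j) \<in> staircase n" using i by (simp add: st_iff)
          then show ?thesis using a Suc by (simp add: build_simps)
        qed
      qed
    qed
    moreover have "j \<in> insert n (freec n T) \<longleftrightarrow> (\<forall>i. (i,j) \<in> staircase n \<longrightarrow> T (i,j) = 0)"
      using True unfolding freec_def by (auto simp: st_iff)
    ultimately show ?thesis using True unfolding freec_def by auto
  next
    case False
    then show ?thesis using S unfolding freec_def by auto
  qed
  then show ?thesis by blast
qed

lemma Yp_rec: "2 * Yp (Suc n) z = (z+1) * Yp n (z+1) + (z-1) * Yp n (z-1)"
proof -
  define A where "A T = insert n (freec n T)" for T
  define Sig where "Sig = Sigma (good n) (\<lambda>T. {S. S \<subseteq> A T \<and> even (card S)})"
  have fA: "finite (A T)" for T unfolding A_def freec_def by simp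
  have nA: "n \<notin> freec n T" for T unfolding freec_def by simp
  have cA: "card (A T) = Suc (card (freec n T))" for T
    unfolding A_def using nA fA unfolding A_def by (simp add: freec_def)
  have "Yp (Suc n) z = (\<Sum>p\<in>Sig. z ^ card (A (fst p) - snd p))"
    unfolding Yp_def
    apply (rule sum.reindex_bij_witness[where j = "\<lambda>M. (topr n M, row0 n M)" and i = "\<lambda>p. build n (fst p) (snd p)"])
    subgoal for M using L2(4) by simp
    subgoal for M unfolding Sig_def A_def using L2(1-3) by auto
    subgoal for p unfolding Sig_def A_def using L3 by (cases p) auto
    subgoal for p unfolding Sig_def A_def using L1 by (cases p) auto
    subgoal for M using L4[OF L2(2)] L2(4) by (simp add: A_def)
    done
  also have "\<dots> = (\<Sum>T\<in>good n. \<Sum>S\<in>{S. S \<subseteq> A T \<and> even (card S)}. z ^ card (A T - S))"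
    unfolding Sig_def
    by (subst sum.Sigma) (use good_fin fA in \<open>auto intro!: sum.cong\<close>)
  also have "\<dots> = (\<Sum>T\<in>good n. \<Sum>S\<in>{S. S \<subseteq> A T \<and> even (card S)}. z ^ (card (A T) - card S))"
    apply (rule sum.cong[OF refl])+
    using fA by (auto simp: card_Diff_subset finite_subset)
  finally have "2 * Yp (Suc n) z = (\<Sum>T\<in>good n. 2 * (\<Sum>S\<in>{S. S \<subseteq> A T \<and> even (card S)}. z ^ (card (A T) - card S)))"
    by (simp add: sum_distrib_left)
  also have "\<dots> = (\<Sum>T\<in>good n. (z+1)^card (A T) + (z-1)^card (A T))"
    using even_sum[OF fA] by simp
  also have "\<dots> = (z+1) * Yp n (z+1) + (z-1) * Yp n (z-1)"
    unfolding Yp_def cA by (simp add: sum.distrib sum_distrib_left)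
  finally show ?thesis .
qed

lemma Yp0: "Yp 0 z = 1"
proof -
  have "good 0 = {\<lambda>x. undefined}"
    unfolding good_def zero_one_fillings_def good_filling_def staircase_def by auto
  moreover have "freec 0 M = {}" for M unfolding freec_def by simp
  ultimately show ?thesis unfolding Yp_def by simp
qed

lemma Qr_Yp: "Qr n z = Yp n z"
proof (induction n arbitrary: z)
  case 0 then show ?case by (simp add: Yp0)
next
  case (Suc n)
  have "Qr (Suc n) z = (2 * Yp (Suc n) z) div 2" using Yp_rec[of n z] Suc.IH by simp
  then show ?case by simp
qed

lemma Yp1: "Yp n 1 = int (card (good n))"
  unfolding Yp_def by simp

theorem corollary2:
  fixes n :: nat and E :: "nat set set"
  assumes "n \<ge> 1" and "n_crossing n E"
  shows "ex E = card {M \<in> zero_one_fillings n. good_filling n M}"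
proof -
  obtain m where m: "n = Suc m" using assms(1) by (cases n) auto
  obtain u v E' where s: "E = insert {u,v} E'" "{u,v} \<notin> E'" "u<v" "n_crossing m E'"
    "\<forall>c\<in>E'. u < Min c \<and> Min c < v \<and> v < Max c" "\<forall>y\<in>pts E'. u<y" "v \<notin> pts E'"
    using ncross_split[of m E] assms(2) m by blast
  have tv: "\<forall>c\<in>E. Min c < v \<and> v \<le> Max c" using s(1,3,5) by (auto simp: pair_minmax)
  have cd: "chord_diagram E" using assms(2) unfolding n_crossing_def by auto
  have z: "cutf 1 v = (\<lambda>_. 0)" unfolding cutf_def by auto
  have "int (ex E) = FF (\<lambda>_. 0) E" by (rule ex_FF[OF cd])
  also have "\<dots> = Qr n 1" using ncross_FF[OF assms(2) tv, of 1] z by simp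
  also have "\<dots> = int (card (good n))" using Qr_Yp Yp1 by simp
  finally show ?thesis unfolding good_def by simp
qed

end
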